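(* Let $p_n(\mathbf y)$ be a linear sequence of symmetric functions of binomial type in the variables $\mathbf y=(y_1,y_2,\dots)$. Then for every complex number $a$ and every $n\ge0$, $$p_n(a,y_1,y_2,\dots)=\sum_{k=0}^n\binom nk\,p_k(a,0,0,\dots)\,p_{n-k}(y_1,y_2,\dots).$$
   Context: A linear sequence of symmetric functions of binomial type is a sequence of the form $$p_n(\mathbf y)=\sum_{\lambda\vdash n}\frac{n!}{\prod_i\lambda_i!}\Big(\prod_ia_{\lambda_i}\Big)m_\lambda(\mathbf y),$$ where $(a_i)_{i\ge0}$ is a sequence of complex numbers (a quasi-species) with $a_0=1$, $a_1\ne0$, and $m_\lambda$ is the monomial symmetric function. For a species, $a_i$ is the number of structures on an $i$-set, and $p_n$ enumerates enriched functions from $\{1,\dots,n\}$ to $\{y_1,y_2,\dots\}$. For a symmetric function $p$, the expression $p(a,y_1,y_2,\dots)$ denotes $p$ evaluated at the variable list $(a,y_1,y_2,\dots)$, and $p(a,0,0,\dots)$ its evaluation with all variables but the first set to $0$. *)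

theory Defs
  imports Complex_Main "HOL-Library.Multiset"
begin

text \<open>Symmetric functions are evaluated at finitely supported sequences of complex
  numbers y :: nat => complex (variables y_0, y_1, ...).  An identity of symmetric
  functions holds iff it holds under all such specializations.\<close>

definition partitions :: "nat \<Rightarrow> nat multiset set" where
  "partitions n = {lam. (\<forall>i \<in># lam. 0 < i) \<and> sum_mset lam = n}"

definition exp_shape :: "(nat \<Rightarrow> nat) \<Rightarrow> nat multiset" where
  "exp_shape \<alpha> = image_mset \<alpha> (mset_set {i. \<alpha> i \<noteq> 0})"

text \<open>Exponent vectors
  with support outside the support of y contribute 0 and are omitted.\<close>
definition monomial_sym :: "nat multiset \<Rightarrow> (nat \<Rightarrow> complex) \<Rightarrow> complex" where
  "monomial_sym lam y =
     (\<Sum>\<alpha> \<in> {\<alpha>. {i. \<alpha> i \<noteq> 0} \<subseteq> {i. y i \<noteq> 0} \<and> exp_shape \<alpha> = lam}.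
        \<Prod>i \<in> {i. \<alpha> i \<noteq> 0}. y i ^ \<alpha> i)"

definition binom_sym :: "(nat \<Rightarrow> complex) \<Rightarrow> nat \<Rightarrow> (nat \<Rightarrow> complex) \<Rightarrow> complex" where
  "binom_sym a n y =
     (\<Sum>lam \<in> partitions n.
        (of_nat (fact n) / of_nat (prod_mset (image_mset fact lam)))
        * prod_mset (image_mset a lam) * monomial_sym lam y)"

definition prepend_var :: "complex \<Rightarrow> (nat \<Rightarrow> complex) \<Rightarrow> nat \<Rightarrow> complex" where
  "prepend_var c y = (\<lambda>i. if i = 0 then c else y (i - 1))"

end

theory Submission
  imports Defs
begin

definition FS :: "nat set \<Rightarrow> nat \<Rightarrow> (nat \<Rightarrow> nat) set" where
  "FS S n = {\<alpha>. (\<forall>i. i \<notin> S \<longrightarrow> \<alpha> i = 0) \<and> sum \<alpha> S = n}"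

definition QS :: "(nat \<Rightarrow> complex) \<Rightarrow> nat set \<Rightarrow> nat \<Rightarrow> (nat \<Rightarrow> complex) \<Rightarrow> complex" where
  "QS a S n y = (\<Sum>\<alpha>\<in>FS S n. of_nat (fact n) / of_nat (\<Prod>i\<in>S. fact (\<alpha> i))
      * (\<Prod>i\<in>S. a (\<alpha> i) * y i ^ \<alpha> i))"

lemma FS_finite: assumes "finite S" shows "finite (FS S n)"
proof -
  have "FS S n \<subseteq> {f. \<forall>x. (x \<in> S \<longrightarrow> f x \<in> {..n}) \<and> (x \<notin> S \<longrightarrow> f x = 0)}"
  proof
    fix \<alpha> assume "\<alpha> \<in> FS S n"
    hence h: "\<forall>i. i \<notin> S \<longrightarrow> \<alpha> i = 0" "sum \<alpha> S = n" by (auto simp: FS_def)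
    have "\<alpha> x \<le> n" if "x \<in> S" for x
      using member_le_sum[of x S \<alpha>] that assms h(2) by auto
    with h show "\<alpha> \<in> {f. \<forall>x. (x \<in> S \<longrightarrow> f x \<in> {..n}) \<and> (x \<notin> S \<longrightarrow> f x = 0)}" by auto
  qed
  thus ?thesis using finite_set_of_finite_funs[OF assms, of "{..n}" 0] finite_subset by blast
qed

lemma QS_empty: "QS a {} m y = (if m = 0 then 1 else 0)"
proof -
  have "FS {} m = (if m = 0 then {\<lambda>_. 0} else {})" by (auto simp: FS_def)
  thus ?thesis by (simp add: QS_def)
qed

lemma QS_insert:
  assumes fin: "finite S" and j: "j \<notin> S"
  shows "QS a (insert j S) n y =
    (\<Sum>k\<le>n. of_nat (n choose k) * (a k * y j ^ k) * QS a S (n - k) y)"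
proof -
  define T where "T = (\<lambda>(k, \<beta>). of_nat (n choose k) * (a k * y j ^ k) *
      (of_nat (fact (n - k)) / of_nat (\<Prod>i\<in>S. fact (\<beta> i)) * (\<Prod>i\<in>S. a (\<beta> i) * y i ^ \<beta> i)))"
  have "(\<Sum>k\<le>n. of_nat (n choose k) * (a k * y j ^ k) * QS a S (n - k) y)
      = (\<Sum>k\<le>n. \<Sum>\<beta>\<in>FS S (n - k). T (k, \<beta>))"
    by (simp add: QS_def T_def sum_distrib_left)
  also have "\<dots> = (\<Sum>p\<in>Sigma {..n} (\<lambda>k. FS S (n - k)). T p)"
    using sum.Sigma[of "{..n}" "\<lambda>k. FS S (n - k)" "\<lambda>k b. T (k, b)"] by (simp add: FS_finite fin)
  also have "\<dots> = QS a (insert j S) n y"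
    unfolding QS_def  apply (rule sym)
  proof (rule sum.reindex_bij_witness[where i = "\<lambda>(k, \<beta>). \<beta>(j := k)" and j = "\<lambda>\<alpha>. (\<alpha> j, \<alpha>(j := 0))"])
    fix \<alpha> assume "\<alpha> \<in> FS (insert j S) n"
    hence h: "\<forall>i. i \<notin> insert j S \<longrightarrow> \<alpha> i = 0" "sum \<alpha> (insert j S) = n" by (auto simp: FS_def)
    have s: "sum \<alpha> (insert j S) = \<alpha> j + sum \<alpha> S" using fin j by simp
    have s2: "sum (\<alpha>(j := 0)) S = sum \<alpha> S" using j by (intro sum.cong) auto
    have p1: "(\<Prod>i\<in>S. fact ((\<alpha>(j := 0)) i)) = (\<Prod>i\<in>S. fact (\<alpha> i))" using j by (intro prod.cong) auto
    have p2: "(\<Prod>i\<in>S. a ((\<alpha>(j := 0)) i) * y i ^ (\<alpha>(j := 0)) i) = (\<Prod>i\<in>S. a (\<alpha> i) * y i ^ \<alpha> i)"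
      using j by (intro prod.cong) auto
    show "(case (\<alpha> j, \<alpha>(j := 0)) of (k, \<beta>) \<Rightarrow> \<beta>(j := k)) = \<alpha>" by simp
    show "(\<alpha> j, \<alpha>(j := 0)) \<in> Sigma {..n} (\<lambda>k. FS S (n - k))"
      using h s s2 by (auto simp: FS_def)
    have kn: "\<alpha> j \<le> n" using h s by simp
    have nz: "(of_nat (\<Prod>i\<in>S. fact (\<alpha> i)) :: complex) \<noteq> 0"
      by (simp add: fin)
    have "T (\<alpha> j, \<alpha>(j := 0)) = of_nat (n choose \<alpha> j) * (a (\<alpha> j) * y j ^ \<alpha> j) *
      (of_nat (fact (n - \<alpha> j)) / of_nat (\<Prod>i\<in>S. fact (\<alpha> i)) * (\<Prod>i\<in>S. a (\<alpha> i) * y i ^ \<alpha> i))"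
      unfolding T_def prod.case p1 p2 by (rule refl)
    also have "\<dots> = of_nat (fact n) / of_nat (\<Prod>i\<in>insert j S. fact (\<alpha> i)) *
          (\<Prod>i\<in>insert j S. a (\<alpha> i) * y i ^ \<alpha> i)"
      using fin j kn nz by (simp add: binomial_fact field_simps)
    finally show "T (\<alpha> j, \<alpha>(j := 0)) = of_nat (fact n) / of_nat (\<Prod>i\<in>insert j S. fact (\<alpha> i)) *
          (\<Prod>i\<in>insert j S. a (\<alpha> i) * y i ^ \<alpha> i)" .
  next
    fix p assume p: "p \<in> Sigma {..n} (\<lambda>k. FS S (n - k))"
    then obtain k \<beta> where pk: "p = (k, \<beta>)" "k \<le> n" "\<beta> \<in> FS S (n - k)" by auto
    hence h: "\<forall>i. i \<notin> S \<longrightarrow> \<beta> i = 0" "sum \<beta> S = n - k" by (auto simp: FS_def)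
    have bj: "\<beta> j = 0" using h j by auto
    show "((case p of (k, \<beta>) \<Rightarrow> \<beta>(j := k)) j, (case p of (k, \<beta>) \<Rightarrow> \<beta>(j := k))(j := 0)) = p"
      using pk bj by auto
    have "sum (\<beta>(j := k)) S = sum \<beta> S" using j by (intro sum.cong) auto
    thus "(case p of (k, \<beta>) \<Rightarrow> \<beta>(j := k)) \<in> FS (insert j S) n"
      using pk h fin j by (auto simp: FS_def)
  qed
  finally show ?thesis by simp
qed

lemma QS_shift:
  assumes fin: "finite T"
  shows "QS a (Suc ` T) m (prepend_var c y) = QS a T m y"
  unfolding QS_def
proof (rule sum.reindex_bij_witness[where j = "\<lambda>\<alpha>. \<alpha> \<circ> Suc" and i = "\<lambda>\<beta>. case_nat 0 \<beta>"])
  fix \<alpha> assume "\<alpha> \<in> FS (Suc ` T) m"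
  hence h: "\<forall>i. i \<notin> Suc ` T \<longrightarrow> \<alpha> i = 0" "sum \<alpha> (Suc ` T) = m" by (auto simp: FS_def)
  have a0: "\<alpha> 0 = 0" using h by auto
  show "case_nat 0 (\<alpha> \<circ> Suc) = \<alpha>"
  proof
    fix i show "case_nat 0 (\<alpha> \<circ> Suc) i = \<alpha> i" using a0 by (cases i) auto
  qed
  have s: "sum \<alpha> (Suc ` T) = sum (\<alpha> \<circ> Suc) T" by (simp add: sum.reindex)
  show "\<alpha> \<circ> Suc \<in> FS T m" using h s by (auto simp: FS_def)
  show "of_nat (fact m) / of_nat (\<Prod>i\<in>T. fact ((\<alpha> \<circ> Suc) i)) *
          (\<Prod>i\<in>T. a ((\<alpha> \<circ> Suc) i) * y i ^ (\<alpha> \<circ> Suc) i) =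
        of_nat (fact m) / of_nat (\<Prod>i\<in>Suc ` T. fact (\<alpha> i)) *
          (\<Prod>i\<in>Suc ` T. a (\<alpha> i) * prepend_var c y i ^ \<alpha> i)"
    by (simp add: prod.reindex prepend_var_def)
next
  fix \<beta> assume "\<beta> \<in> FS T m"
  hence h: "\<forall>i. i \<notin> T \<longrightarrow> \<beta> i = 0" "sum \<beta> T = m" by (auto simp: FS_def)
  show "case_nat 0 \<beta> \<circ> Suc = \<beta>" by auto
  have s: "sum (case_nat 0 \<beta>) (Suc ` T) = sum \<beta> T" by (simp add: sum.reindex)
  have "case_nat 0 \<beta> i = 0" if "i \<notin> Suc ` T" for i
    using that h by (cases i) auto
  thus "case_nat 0 \<beta> \<in> FS (Suc ` T) m" using h s by (auto simp: FS_def)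
qed

lemma shape_sum: "sum_mset (exp_shape \<alpha>) = sum \<alpha> {i. \<alpha> i \<noteq> 0}"
  by (simp add: exp_shape_def sum_unfold_sum_mset)

lemma shape_prod: "prod_mset (image_mset f (exp_shape \<alpha>)) = (\<Prod>i\<in>{i. \<alpha> i \<noteq> 0}. f (\<alpha> i))"
  by (simp add: exp_shape_def prod_unfold_prod_mset multiset.map_comp o_def)

lemma shape_pos: "i \<in># exp_shape \<alpha> \<Longrightarrow> 0 < i"
  by (cases "finite {i. \<alpha> i \<noteq> 0}") (auto simp: exp_shape_def)

lemma binom_sym_QS:
  assumes a0: "a 0 = 1" and fin: "finite S" and sub: "{i. y i \<noteq> 0} \<subseteq> S"
  shows "binom_sym a n y = QS a S n y"
proof -
  define Y where "Y = {i. y i \<noteq> 0}"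
  have finY: "finite Y" using fin sub finite_subset unfolding Y_def by blast
  define G where "G = {\<alpha>. {i. \<alpha> i \<noteq> 0} \<subseteq> Y \<and> sum \<alpha> {i. \<alpha> i \<noteq> 0} = n}"
  define w where "w = (\<lambda>\<alpha>. (of_nat (fact n) / of_nat (\<Prod>i\<in>{i. \<alpha> i \<noteq> 0}. fact (\<alpha> i)) :: complex)
      * (\<Prod>i\<in>{i. \<alpha> i \<noteq> 0}. a (\<alpha> i)) * (\<Prod>i\<in>{i. \<alpha> i \<noteq> 0}. y i ^ \<alpha> i))"
  have supp_sum: "sum \<alpha> {i. \<alpha> i \<noteq> 0} = sum \<alpha> T"
    if "finite T" "{i. \<alpha> i \<noteq> 0} \<subseteq> T" for \<alpha> :: "nat \<Rightarrow> nat" and T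
    using that by (intro sum.mono_neutral_left) auto
  have GF: "G \<subseteq> FS S n"
  proof
    fix \<alpha> assume "\<alpha> \<in> G"
    hence "{i. \<alpha> i \<noteq> 0} \<subseteq> S" "sum \<alpha> {i. \<alpha> i \<noteq> 0} = n" using sub unfolding G_def Y_def by auto
    thus "\<alpha> \<in> FS S n" using supp_sum[OF fin] unfolding FS_def by auto
  qed
  have finG: "finite G" using GF FS_finite[OF fin] finite_subset by blast
  have finP: "finite (partitions n)"
  proof -
    have "partitions n \<subseteq> {M. set_mset M \<subseteq> {..n} \<and> size M \<le> n}"
    proof
      fix M assume "M \<in> partitions n"
      hence h: "\<forall>i\<in>#M. 0 < i" "sum_mset M = n" by (auto simp: partitions_def)
      have "set_mset M \<subseteq> {..n}" using h by (auto dest: multi_member_split)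
      moreover have "size M \<le> sum_mset M" using h(1)
        by (induction M) (auto)
      ultimately show "M \<in> {M. set_mset M \<subseteq> {..n} \<and> size M \<le> n}" using h by auto
    qed
    moreover have "finite {M. set_mset M \<subseteq> {..n} \<and> size M \<le> n}"
    proof -
      have "{M. set_mset M \<subseteq> {..n} \<and> size M \<le> n} = (\<Union>k\<le>n. multisets_of_size {..n} k)"
        by (auto simp: multisets_of_size_def)
      thus ?thesis by auto
    qed
    ultimately show ?thesis using finite_subset by blast
  qed
  have "binom_sym a n y = (\<Sum>lam\<in>partitions n. \<Sum>\<alpha>\<in>{\<alpha>\<in>G. exp_shape \<alpha> = lam}. w \<alpha>)"
    unfolding binom_sym_def monomial_sym_def sum_distrib_left
  proof (rule sum.cong[OF refl], rule sum.cong)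
    fix lam assume lam: "lam \<in> partitions n"
    show "{\<alpha>. {i. \<alpha> i \<noteq> 0} \<subseteq> {i. y i \<noteq> 0} \<and> exp_shape \<alpha> = lam} = {\<alpha> \<in> G. exp_shape \<alpha> = lam}"
      using lam shape_sum unfolding G_def Y_def partitions_def by auto
    fix \<alpha> assume "\<alpha> \<in> {\<alpha> \<in> G. exp_shape \<alpha> = lam}"
    hence e: "exp_shape \<alpha> = lam" by auto
    show "of_nat (fact n) / of_nat (prod_mset (image_mset fact lam)) * prod_mset (image_mset a lam) *
        (\<Prod>i\<in>{i. \<alpha> i \<noteq> 0}. y i ^ \<alpha> i) = w \<alpha>"
      unfolding w_def e[symmetric] shape_prod by simp
  qed
  also have "\<dots> = sum w G"
  proof (rule sum.group[OF finG finP])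
    show "exp_shape ` G \<subseteq> partitions n"
      using shape_pos shape_sum unfolding G_def partitions_def by auto
  qed
  also have "\<dots> = QS a S n y"
    unfolding QS_def
  proof (rule sym, rule sum.mono_neutral_cong_right[OF FS_finite[OF fin] GF])
    show "\<forall>\<alpha>\<in>FS S n - G. of_nat (fact n) / of_nat (\<Prod>i\<in>S. fact (\<alpha> i)) *
          (\<Prod>i\<in>S. a (\<alpha> i) * y i ^ \<alpha> i) = 0"
    proof
      fix \<alpha> assume "\<alpha> \<in> FS S n - G"
      hence h: "\<forall>i. i \<notin> S \<longrightarrow> \<alpha> i = 0" "sum \<alpha> S = n" "\<alpha> \<notin> G" by (auto simp: FS_def)
      have sS: "{i. \<alpha> i \<noteq> 0} \<subseteq> S" using h by auto
      have "\<not> {i. \<alpha> i \<noteq> 0} \<subseteq> Y" using h supp_sum[OF fin sS] unfolding G_def by auto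
      then obtain i where i: "\<alpha> i \<noteq> 0" "y i = 0" unfolding Y_def by auto
      have "(\<Prod>i\<in>S. a (\<alpha> i) * y i ^ \<alpha> i) = 0"
        using i sS fin by (intro prod_zero) auto
      thus "of_nat (fact n) / of_nat (\<Prod>i\<in>S. fact (\<alpha> i)) *
          (\<Prod>i\<in>S. a (\<alpha> i) * y i ^ \<alpha> i) = (0::complex)" by simp
    qed
  next
    fix \<alpha> assume "\<alpha> \<in> G"
    hence sS: "{i. \<alpha> i \<noteq> 0} \<subseteq> S" using sub unfolding G_def Y_def by auto
    have p1: "(\<Prod>i\<in>S. fact (\<alpha> i)) = (\<Prod>i\<in>{i. \<alpha> i \<noteq> 0}. fact (\<alpha> i))"
      using sS fin by (intro prod.mono_neutral_right) auto
    have p2: "(\<Prod>i\<in>S. a (\<alpha> i) * y i ^ \<alpha> i) = (\<Prod>i\<in>{i. \<alpha> i \<noteq> 0}. a (\<alpha> i) * y i ^ \<alpha> i)"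
      using sS fin a0 by (intro prod.mono_neutral_right) auto
    show "of_nat (fact n) / of_nat (\<Prod>i\<in>S. fact (\<alpha> i)) *
          (\<Prod>i\<in>S. a (\<alpha> i) * y i ^ \<alpha> i) = w \<alpha>"
      unfolding p1 p2 unfolding w_def prod.distrib by (simp add: mult.assoc)
  qed
  finally show ?thesis .
qed

lemma binom_sym_single:
  assumes a0: "a 0 = 1"
  shows "binom_sym a k (prepend_var c (\<lambda>_. 0)) = a k * c ^ k"
proof -
  have "binom_sym a k (prepend_var c (\<lambda>_. 0)) = QS a (insert 0 {}) k (prepend_var c (\<lambda>_. 0))"
    by (rule binom_sym_QS[where a=a, OF a0]) (auto simp: prepend_var_def)
  also have "\<dots> = (\<Sum>j\<le>k. of_nat (k choose j) * (a j * c ^ j) * (if k - j = 0 then 1 else 0))"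
    by (subst QS_insert) (auto simp: QS_empty prepend_var_def)
  also have "\<dots> = (\<Sum>j\<le>k. if j = k then of_nat (k choose j) * (a j * c ^ j) else 0)"
    by (intro sum.cong) auto
  also have "\<dots> = a k * c ^ k" by simp
  finally show ?thesis .
qed

theorem mainTheorem5:
  fixes a :: "nat \<Rightarrow> complex" and c :: complex and y :: "nat \<Rightarrow> complex" and n :: nat
  assumes "a 0 = 1" and "a 1 \<noteq> 0" and "finite {i. y i \<noteq> 0}"
  shows "binom_sym a n (prepend_var c y) =
    (\<Sum>k\<le>n. of_nat (n choose k) * binom_sym a k (prepend_var c (\<lambda>_. 0))
                 * binom_sym a (n - k) y)"
proof -
  define T where "T = {i. y i \<noteq> 0}"
  have finT: "finite T" using assms(3) unfolding T_def .
  have sub: "{i. prepend_var c y i \<noteq> 0} \<subseteq> insert 0 (Suc ` T)"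
  proof
    fix i assume "i \<in> {i. prepend_var c y i \<noteq> 0}"
    thus "i \<in> insert 0 (Suc ` T)" unfolding T_def prepend_var_def
      by (cases i) auto
  qed
  have "binom_sym a n (prepend_var c y) = QS a (insert 0 (Suc ` T)) n (prepend_var c y)"
    by (rule binom_sym_QS[where a=a, OF assms(1) _ sub]) (simp add: finT)
  also have "\<dots> = (\<Sum>k\<le>n. of_nat (n choose k) * (a k * c ^ k) * QS a (Suc ` T) (n - k) (prepend_var c y))"
    by (subst QS_insert) (auto simp: finT prepend_var_def)
  also have "\<dots> = (\<Sum>k\<le>n. of_nat (n choose k) * binom_sym a k (prepend_var c (\<lambda>_. 0))
                 * binom_sym a (n - k) y)"
  proof (rule sum.cong[OF refl])
    fix k
    have "QS a (Suc ` T) (n - k) (prepend_var c y) = binom_sym a (n - k) y"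
      unfolding QS_shift[OF finT] by (rule sym, rule binom_sym_QS[where a=a, OF assms(1) finT]) (simp add: T_def)
    thus "of_nat (n choose k) * (a k * c ^ k) * QS a (Suc ` T) (n - k) (prepend_var c y) =
        of_nat (n choose k) * binom_sym a k (prepend_var c (\<lambda>_. 0)) * binom_sym a (n - k) y"
      by (simp add: binom_sym_single[where a=a, OF assms(1)])
  qed
  finally show ?thesis .
qed

end
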